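(* (i) Let $\|\cdot\|$ be a URTC-norm on $\mathbb{R}^2$ with unit sphere $S$. If $a,b,c,d\in S$ satisfy $\|a-d\|=\|b-c\|=1$ and the 6-tuple $(a-d,a,b,c,d,d-a)$ is positively oriented, then $a=b$ and $c=d$. (ii) Let $\|\cdot\|$ be an arbitrary norm on $\mathbb{R}^2$, let $a,b\in\mathbb{R}^2$ with $\gamma:=\|a-b\|>0$, and let $\alpha,\beta\ge 0$ satisfy $|\beta-\gamma|\le\alpha\le\beta+\gamma$. Then there exists $c\in\mathbb{R}^2$ with $\|a-c\|=\beta$ and $\|b-c\|=\alpha$.
   Context: A norm $\|\cdot\|$ on $\mathbb{R}^2$ is called a URTC-norm if for every $a,b\in\mathbb{R}^2$ with $\|a-b\|=1$ the system $\|a-x\|=1$, $\|b-x\|=1$ is satisfied by exactly two points $x\in\mathbb{R}^2$. $S=\{x:\|x\|=1\}$ is the unit sphere (a closed convex curve around $0$). A tuple of points of $S$ is positively oriented if the points appear in this order (not necessarily distinct) when traversing $S$ counterclockwise from the first to the last point of the tuple (here $a-d$ and $d-a$ are antipodal points of $S$, so the tuple lies on a half of $S$). *)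

theory Defs
  imports "HOL-Analysis.Analysis"
begin

definition is_plane_norm :: "(real^2 \<Rightarrow> real) \<Rightarrow> bool" where
  "is_plane_norm N \<longleftrightarrow>
     (\<forall>x. 0 \<le> N x) \<and> (\<forall>x. N x = 0 \<longleftrightarrow> x = 0) \<and>
     (\<forall>c x. N (c *\<^sub>R x) = \<bar>c\<bar> * N x) \<and>
     (\<forall>x y. N (x + y) \<le> N x + N y)"

definition URTC_norm :: "(real^2 \<Rightarrow> real) \<Rightarrow> bool" where
  "URTC_norm N \<longleftrightarrow> is_plane_norm N \<and>
     (\<forall>a b. N (a - b) = 1 \<longrightarrow> finite {x. N (a - x) = 1 \<and> N (b - x) = 1}
                              \<and> card {x. N (a - x) = 1 \<and> N (b - x) = 1} = 2)"

definition dir :: "real \<Rightarrow> real^2" where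
  "dir t = vector [cos t, sin t]"

text \<open>A list of nonzero points (of the unit sphere) is positively oriented if they
  appear in this order (not necessarily distinct) when going counterclockwise
  around the origin from the first to the last one, within less than one full turn.\<close>
definition pos_oriented :: "(real^2) list \<Rightarrow> bool" where
  "pos_oriented ps \<longleftrightarrow>
     (\<exists>ts. length ts = length ps \<and> sorted ts \<and>
        (ts \<noteq> [] \<longrightarrow> last ts < hd ts + 2 * pi) \<and>
        (\<forall>i < length ps. \<exists>r > 0. ps ! i = r *\<^sub>R dir (ts ! i)))"

end

theory Submission
  imports Defs
begin


lemma pn_scale: "is_plane_norm N \<Longrightarrow> N (c *\<^sub>R x) = \<bar>c\<bar> * N x" by (simp add: is_plane_norm_def)
lemma pn_tri: "is_plane_norm N \<Longrightarrow> N (x + y) \<le> N x + N y" by (simp add: is_plane_norm_def)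
lemma pn_nonneg: "is_plane_norm N \<Longrightarrow> 0 \<le> N x" by (simp add: is_plane_norm_def)
lemma pn_zero: "is_plane_norm N \<Longrightarrow> N x = 0 \<longleftrightarrow> x = 0" by (simp add: is_plane_norm_def)
lemma pn_neg: "is_plane_norm N \<Longrightarrow> N (- x) = N x"
  using pn_scale[of N "-1" x] by simp
lemma pn_commute: "is_plane_norm N \<Longrightarrow> N (x - y) = N (y - x)"
  using pn_neg[of N "y - x"] by simp
lemma pn_diff: "is_plane_norm N \<Longrightarrow> N (x - y) \<le> N x + N y"
  using pn_tri[of N x "-y"] pn_neg[of N y] by simp

lemma mono_core:
  assumes N: "is_plane_norm N" and xyz: "N x = 1" "N y = 1" "N z = 1"
    and l: "l \<ge> 0" and m: "m \<ge> 0" and y: "y = l *\<^sub>R x + m *\<^sub>R z"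
  shows "N (y - x) \<le> N (z - x)"
proof -
  have "1 \<le> l + m"
    using pn_tri[OF N, of "l *\<^sub>R x" "m *\<^sub>R z"] pn_scale[OF N] xyz l m y by simp
  define s where "s = l + m"
  have s1: "s \<ge> 1" using \<open>1 \<le> l + m\<close> s_def by simp
  define t where "t = m / s"
  have t0: "0 \<le> t" "t \<le> 1" using s1 l m by (auto simp: t_def s_def field_simps)
  define P where "P = (1/s) *\<^sub>R y"
  have P: "P = (1 - t) *\<^sub>R x + t *\<^sub>R z" using s1
    by (simp add: P_def y t_def s_def algebra_simps field_simps scaleR_add_right scaleR_diff_left del: scaleR_minus_left)
  have e1: "y - x = (1 - 1/s) *\<^sub>R y + t *\<^sub>R (z - x)"
    using P by (simp add: P_def algebra_simps)
  have e2: "z = (1 - t) *\<^sub>R (z - x) + P" using P by (simp add: algebra_simps)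
  have "N (y - x) \<le> (1 - 1/s) + t * N (z - x)"
    using pn_tri[OF N, of "(1 - 1/s) *\<^sub>R y" "t *\<^sub>R (z - x)"] e1 pn_scale[OF N] xyz s1 t0
    by (simp add: abs_of_nonneg)
  moreover have "1 \<le> (1 - t) * N (z - x) + 1/s"
    using pn_tri[OF N, of "(1 - t) *\<^sub>R (z - x)" P] e2 pn_scale[OF N] xyz s1 t0
    by (simp add: abs_of_nonneg P_def)
  ultimately show ?thesis by (simp add: algebra_simps)
qed


lemma dir_comp: "dir t $ 1 = cos t" "dir t $ 2 = sin t"
  by (simp_all add: dir_def)

lemma dir_id: "sin (u - s) *\<^sub>R dir t = sin (u - t) *\<^sub>R dir s + sin (t - s) *\<^sub>R dir u"
  unfolding vec_eq_iff forall_2 by (simp add: dir_comp sin_diff cos_diff algebra_simps)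

lemma dir_pi: "dir (s + pi) = - dir s"
  unfolding vec_eq_iff forall_2 by (simp add: dir_comp)

lemma unit_same:
  assumes N: "is_plane_norm N" and "rx > 0" "ry > 0" "N (rx *\<^sub>R v) = 1" "N (ry *\<^sub>R v) = 1"
  shows "rx = ry"
  using assms pn_scale[OF N] by (metis abs_of_pos mult_cancel_right2 mult_eq_0_iff not_one_le_zero order_refl nonzero_mult_div_cancel_right divide_self_if)

lemma angle_mono:
  assumes N: "is_plane_norm N" and st: "s \<le> t" "t \<le> u" "u \<le> s + pi"
    and r: "rx > 0" "ry > 0" "rz > 0"
    and xd: "x = rx *\<^sub>R dir s" and yd: "y = ry *\<^sub>R dir t" and zd: "z = rz *\<^sub>R dir u"
    and xyz: "N x = 1" "N y = 1" "N z = 1"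
  shows "N (y - x) \<le> N (z - x) \<and> N (y - z) \<le> N (x - z)"
proof -
  consider "u = s" | "u = s + pi" | "s < u" "u < s + pi" using st by linarith
  then show ?thesis
  proof cases
    case 1
    then have "t = s" using st by simp
    have "rx = ry" using unit_same[OF N r(1) r(2)] xyz xd yd \<open>t = s\<close> by simp
    moreover have "rx = rz" using unit_same[OF N r(1) r(3)] xyz xd zd 1 by simp
    ultimately show ?thesis using xd yd zd 1 \<open>t = s\<close> pn_nonneg[OF N] by simp
  next
    case 2
    have "N (rz *\<^sub>R dir s) = 1" using xyz zd 2 dir_pi pn_neg[OF N] by (metis scaleR_minus_right)
    then have "rx = rz" using unit_same[OF N r(1) r(3)] xyz xd by simp
    then have zx: "z = - x" using zd xd 2 dir_pi by simp
    have xx: "N (x + x) = 2"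
    proof -
      have "N (x + x) = N ((2::real) *\<^sub>R x)" by (simp only: scaleR_2)
      also have "\<dots> = 2" by (simp only: pn_scale[OF N] xyz)
      finally show ?thesis .
    qed
    have ea: "z - x = - (x + x)" using zx by simp
    have a: "N (z - x) = 2" unfolding ea by (simp only: pn_neg[OF N] xx)
    have eb: "x - z = x + x" using zx by simp
    have b: "N (x - z) = 2" unfolding eb by (rule xx)
    show ?thesis using a b pn_diff[OF N, of y x] pn_diff[OF N, of y z] xyz by (intro conjI; linarith)
  next
    case 3
    have sp: "sin (u - s) > 0" using 3 by (intro sin_gt_zero) auto
    have s1: "sin (u - t) \<ge> 0" using st by (intro sin_ge_zero) auto
    have s2: "sin (t - s) \<ge> 0" using st by (intro sin_ge_zero) auto
    define l where "l = ry * sin (u - t) / (sin (u - s) * rx)"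
    define m where "m = ry * sin (t - s) / (sin (u - s) * rz)"
    have l0: "l \<ge> 0" using sp s1 r by (simp add: l_def)
    have m0: "m \<ge> 0" using sp s2 r by (simp add: m_def)
    have "y = (ry / sin (u - s)) *\<^sub>R (sin (u - s) *\<^sub>R dir t)" using sp yd by simp
    also have "\<dots> = l *\<^sub>R x + m *\<^sub>R z"
    proof -
      have h1: "l * rx = ry / sin (u - s) * sin (u - t)" using r sp by (simp add: l_def)
      have h2: "m * rz = ry / sin (u - s) * sin (t - s)" using r sp by (simp add: m_def)
      have "l *\<^sub>R x + m *\<^sub>R z = (l * rx) *\<^sub>R dir s + (m * rz) *\<^sub>R dir u"
        by (simp add: xd zd)
      also have "\<dots> = (ry / sin (u - s)) *\<^sub>R (sin (u - t) *\<^sub>R dir s + sin (t - s) *\<^sub>R dir u)"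
        unfolding h1 h2 scaleR_add_right by simp
      also have "\<dots> = (ry / sin (u - s)) *\<^sub>R (sin (u - s) *\<^sub>R dir t)" by (simp only: dir_id[of u s t])
      finally show ?thesis by (rule sym)
    qed
    finally have ye: "y = l *\<^sub>R x + m *\<^sub>R z" .
    show ?thesis
      using mono_core[OF N xyz l0 m0 ye] mono_core[OF N xyz(3) xyz(2) xyz(1) m0 l0] ye by (simp add: add.commute)
  qed
qed


lemma pn_convex: "is_plane_norm N \<Longrightarrow> convex_on UNIV N"
proof (rule convex_onI)
  fix t :: real and x y assume N: "is_plane_norm N" and t: "0 < t" "t < 1"
  show "N ((1 - t) *\<^sub>R x + t *\<^sub>R y) \<le> (1 - t) * N x + t * N y"
    using pn_tri[OF N, of "(1 - t) *\<^sub>R x" "t *\<^sub>R y"] pn_scale[OF N] t by simp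
qed simp

lemma pn_cont: "is_plane_norm N \<Longrightarrow> continuous_on UNIV N"
  by (rule convex_on_continuous) (auto intro: pn_convex)

lemma rot_sq: "((c::real) * x - s * y)^2 + (c * y + s * x)^2 = (c^2 + s^2) * (x^2 + y^2)"
  by (simp add: power2_eq_square algebra_simps)

lemma part2:
  assumes N: "is_plane_norm N" and g: "N (a - b) > 0" and al: "\<alpha> \<ge> 0" and be: "\<beta> \<ge> 0"
    and h1: "\<bar>\<beta> - N (a - b)\<bar> \<le> \<alpha>" and h2: "\<alpha> \<le> \<beta> + N (a - b)"
  shows "\<exists>c. N (a - c) = \<beta> \<and> N (b - c) = \<alpha>"
proof -
  define u where "u = b - a"
  define \<gamma> where "\<gamma> = N (a - b)"
  have Nu: "N u = \<gamma>" using pn_commute[OF N] by (simp add: u_def \<gamma>_def)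
  have gp: "\<gamma> > 0" using g \<gamma>_def by simp
  have u0: "u \<noteq> 0" using Nu gp pn_zero[OF N, of u] by force
  define w :: "real^2" where "w = vector [- (u $ 2), u $ 1]"
  define v where "v = (\<lambda>t::real. cos (pi * t) *\<^sub>R u + sin (pi * t) *\<^sub>R w)"
  have v0: "v t \<noteq> 0" for t
  proof
    assume "v t = 0"
    then have e1: "cos (pi * t) * u $ 1 - sin (pi * t) * u $ 2 = 0"
      and e2: "cos (pi * t) * u $ 2 + sin (pi * t) * u $ 1 = 0"
      by (auto simp: v_def w_def vec_eq_iff forall_2)
    have "(u $ 1)^2 + (u $ 2)^2 = (cos (pi * t) * u $ 1 - sin (pi * t) * u $ 2)^2 + (cos (pi * t) * u $ 2 + sin (pi * t) * u $ 1)^2"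
    proof -
      have "(cos (pi * t) * u $ 1 - sin (pi * t) * u $ 2)^2 + (cos (pi * t) * u $ 2 + sin (pi * t) * u $ 1)^2
          = ((cos (pi * t))^2 + (sin (pi * t))^2) * ((u $ 1)^2 + (u $ 2)^2)"
        by (rule rot_sq)
      then show ?thesis unfolding sin_cos_squared_add2 by simp
    qed
    then have "(u $ 1)^2 + (u $ 2)^2 = 0" using e1 e2 by simp
    then have "u $ 1 = 0" "u $ 2 = 0" by (auto simp: add_nonneg_eq_0_iff)
    then show False using u0 by (auto simp: vec_eq_iff forall_2)
  qed
  have Nvp: "N (v t) > 0" for t using v0[of t] pn_zero[OF N, of "v t"] pn_nonneg[OF N, of "v t"] by auto
  define c where "c = (\<lambda>t. a + (\<beta> / N (v t)) *\<^sub>R v t)"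
  have ac: "N (a - c t) = \<beta>" for t
  proof -
    have "a - c t = (- (\<beta> / N (v t))) *\<^sub>R v t" by (simp add: c_def)
    then show ?thesis using pn_neg[OF N] pn_scale[OF N] Nvp[of t] be by simp
  qed
  define f where "f = (\<lambda>t. N (b - c t))"
  have cN: "continuous_on S g \<Longrightarrow> continuous_on S (\<lambda>x. N (g x))" for S and g :: "real \<Rightarrow> real^2"
    using continuous_on_compose2[OF pn_cont[OF N], of S g] by auto
  have cv: "continuous_on S v" for S unfolding v_def by (intro continuous_intros)
  have cf: "continuous_on {0..1} f"
  proof -
    have cn: "continuous_on {0..1} (\<lambda>t. N (v t))" by (rule cN[OF cv])
    have cd: "continuous_on {0..1} (\<lambda>t. \<beta> / N (v t))"
      by (rule continuous_on_divide[OF continuous_on_const cn]) (use Nvp in \<open>auto simp: less_imp_neq[symmetric]\<close>)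
    have "continuous_on {0..1} (\<lambda>t. b - (a + (\<beta> / N (v t)) *\<^sub>R v t))"
      by (intro continuous_intros cd cv)
    then show ?thesis unfolding f_def c_def by (rule cN)
  qed
  have v1: "v 0 = u" by (simp add: v_def)
  have v2: "v 1 = - u" by (simp add: v_def)
  have f0: "f 0 = \<bar>\<beta> - \<gamma>\<bar>"
  proof -
    have "b - c 0 = (1 - \<beta> / \<gamma>) *\<^sub>R u" using u_def by (simp add: c_def v1 Nu algebra_simps)
    then have "f 0 = \<bar>1 - \<beta> / \<gamma>\<bar> * \<gamma>" using pn_scale[OF N] Nu by (simp add: f_def)
    also have "\<dots> = \<bar>\<beta> - \<gamma>\<bar>" using gp by (simp add: abs_mult_pos' field_simps abs_minus_commute)
    finally show ?thesis .
  qed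
  have f1: "f 1 = \<beta> + \<gamma>"
  proof -
    have Nm: "N (- u) = \<gamma>" using pn_neg[OF N] Nu by simp
    have "b - c 1 = (1 + \<beta> / \<gamma>) *\<^sub>R u" using u_def by (simp add: c_def v2 Nm algebra_simps)
    then have "f 1 = \<bar>1 + \<beta> / \<gamma>\<bar> * \<gamma>" using pn_scale[OF N] Nu by (simp add: f_def)
    also have "\<dots> = \<beta> + \<gamma>" using gp be by (simp add: field_simps)
    finally show ?thesis .
  qed
  obtain t where "0 \<le> t" "t \<le> 1" "f t = \<alpha>"
    using IVT'[of f 0 \<alpha> 1] f0 f1 h1 h2 cf by (auto simp: \<gamma>_def)
  then show ?thesis using ac[of t] by (auto simp: f_def)
qed


lemma dir_nz: "dir t \<noteq> 0"
proof
  assume "dir t = 0"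
  then have "cos t = 0" "sin t = 0" using dir_comp[of t] by auto
  then show False using sin_cos_squared_add[of t] by simp
qed

lemma antipodal_angle:
  assumes r: "r0 > 0" "r5 > 0" and t: "t0 \<le> t5" "t5 < t0 + 2 * pi"
    and e: "r5 *\<^sub>R dir t5 = - (r0 *\<^sub>R dir t0)"
  shows "t5 = t0 + pi"
proof -
  have c: "r5 * cos t5 = - (r0 * cos t0)" "r5 * sin t5 = - (r0 * sin t0)"
    using arg_cong[OF e, of "\<lambda>v. v $ 1"] arg_cong[OF e, of "\<lambda>v. v $ 2"] by (simp_all add: dir_comp)
  have "r5 * sin (t5 - t0) = (r5 * sin t5) * cos t0 - (r5 * cos t5) * sin t0"
    by (simp add: sin_diff algebra_simps)
  also have "\<dots> = 0" unfolding c by (simp add: algebra_simps)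
  finally have "sin (t5 - t0) = 0" using r by simp
  then obtain i :: int where i: "t5 - t0 = of_int i * pi" by (auto simp: sin_zero_iff_int2)
  have "of_int i \<ge> (0::real)" using i t pi_gt_zero by (metis diff_ge_0_iff_ge zero_le_mult_iff not_le pi_gt_zero)
  moreover have "of_int i < (2::real)" using i t pi_gt_zero
    by (metis add.commute diff_less_eq mult_less_cancel_right_pos)
  ultimately have "i = 0 \<or> i = 1" by linarith
  moreover have "i \<noteq> 0"
  proof
    assume "i = 0"
    then have "t5 = t0" using i by simp
    then have "(r5 + r0) *\<^sub>R dir t0 = 0" using e by (simp add: scaleR_add_left)
    then show False using r dir_nz[of t0] by simp
  qed
  ultimately show ?thesis using i by simp
qed

lemma part1:
  assumes U: "URTC_norm N" and u: "N a = 1" "N b = 1" "N c = 1" "N d = 1"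
    and ad: "N (a - d) = 1" and bc: "N (b - c) = 1"
    and pos: "pos_oriented [a - d, a, b, c, d, d - a]"
  shows "a = b \<and> c = d"
proof -
  have N: "is_plane_norm N" using U by (simp add: URTC_norm_def)
  have UR: "\<And>p q. N (p - q) = 1 \<Longrightarrow> finite {x. N (p - x) = 1 \<and> N (q - x) = 1}
                              \<and> card {x. N (p - x) = 1 \<and> N (q - x) = 1} = 2"
    using U by (simp add: URTC_norm_def)
  obtain ts where len0: "length ts = length [a - d, a, b, c, d, d - a]" and so: "sorted ts"
    and lt0: "ts \<noteq> [] \<longrightarrow> last ts < hd ts + 2 * pi"
    and P0: "\<forall>i < length [a - d, a, b, c, d, d - a]. \<exists>r > 0. [a - d, a, b, c, d, d - a] ! i = r *\<^sub>R dir (ts ! i)"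
    using pos unfolding pos_oriented_def by blast
  have len: "length ts = 6" using len0 by simp
  have lt: "last ts < hd ts + 2 * pi" using lt0 len by auto
  have P: "\<forall>i < 6. \<exists>r > 0. [a - d, a, b, c, d, d - a] ! i = r *\<^sub>R dir (ts ! i)" using P0 by simp
  define t0 where "t0 = ts ! 0"
  define t1 where "t1 = ts ! 1"
  define t2 where "t2 = ts ! 2"
  define t3 where "t3 = ts ! 3"
  define t4 where "t4 = ts ! 4"
  define t5 where "t5 = ts ! 5"
  obtain r0 where r0: "r0 > 0" "a - d = r0 *\<^sub>R dir t0" using P[rule_format, of 0] by (auto simp: t0_def)
  obtain r1 where r1: "r1 > 0" "a = r1 *\<^sub>R dir t1" using P[rule_format, of 1] by (auto simp: t1_def)
  obtain r2 where r2: "r2 > 0" "b = r2 *\<^sub>R dir t2" using P[rule_format, of 2] by (auto simp: t2_def)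
  obtain r3 where r3: "r3 > 0" "c = r3 *\<^sub>R dir t3" using P[rule_format, of 3] by (auto simp: t3_def)
  obtain r4 where r4: "r4 > 0" "d = r4 *\<^sub>R dir t4" using P[rule_format, of 4] by (auto simp: t4_def)
  obtain r5 where r5: "r5 > 0" "d - a = r5 *\<^sub>R dir t5" using P[rule_format, of 5] by (auto simp: t5_def)
  have o: "t0 \<le> t1" "t1 \<le> t2" "t2 \<le> t3" "t3 \<le> t4" "t4 \<le> t5"
    using sorted_nth_mono[OF so] len by (auto simp: t0_def t1_def t2_def t3_def t4_def t5_def)
  have tsn: "ts \<noteq> []" using len by auto
  have hl: "hd ts = t0" "last ts = t5"
    using hd_conv_nth[OF tsn] last_conv_nth[OF tsn] len by (simp_all add: t0_def t5_def)
  have "t5 = t0 + pi"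
  proof (rule antipodal_angle[OF r0(1) r5(1)])
    show "t0 \<le> t5" using o by linarith
    show "t5 < t0 + 2 * pi" using lt hl by simp
    show "r5 *\<^sub>R dir t5 = - (r0 *\<^sub>R dir t0)" using r0 r5 by (metis minus_diff_eq)
  qed
  have da: "N (d - a) = 1" using ad pn_commute[OF N] by metis
  have I1: "N (b - c) \<le> N (a - c)"
    using angle_mono[OF N o(2) o(3) _ r1(1) r2(1) r3(1) r1(2) r2(2) r3(2) u(1) u(2) u(3)] o \<open>t5 = t0 + pi\<close> by simp
  have I2: "N (c - a) \<le> N (d - a)"
    using angle_mono[OF N _ o(4) _ r1(1) r3(1) r4(1) r1(2) r3(2) r4(2) u(1) u(3) u(4)] o \<open>t5 = t0 + pi\<close> by simp
  have I3: "N (c - b) \<le> N (d - b)"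
    using angle_mono[OF N o(3) o(4) _ r2(1) r3(1) r4(1) r2(2) r3(2) r4(2) u(2) u(3) u(4)] o \<open>t5 = t0 + pi\<close> by simp
  have I4: "N (b - d) \<le> N (a - d)"
    using angle_mono[OF N o(2) _ _ r1(1) r2(1) r4(1) r1(2) r2(2) r4(2) u(1) u(2) u(4)] o \<open>t5 = t0 + pi\<close> by simp
  have I5: "N (a - (a - d)) \<le> N (c - (a - d))"
    using angle_mono[OF N o(1) _ _ r0(1) r1(1) r3(1) r0(2) r1(2) r3(2) ad u(1) u(3)] o \<open>t5 = t0 + pi\<close> by simp
  have I6: "N (d - b) \<le> N ((d - a) - b)"
    using angle_mono[OF N _ o(5) _ r2(1) r4(1) r5(1) r2(2) r4(2) r5(2) u(2) u(4) da] o \<open>t5 = t0 + pi\<close> by simp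
  have ac: "N (a - c) = 1"
    using I1 I2 bc da pn_commute[OF N, of c a] by linarith
  have bd: "N (b - d) = 1"
    using I3 I4 bc ad pn_commute[OF N, of c b] pn_commute[OF N, of d b] by linarith
  have two: "N (x + x) = 2" if "N x = 1" for x
  proof -
    have "N (x + x) = N ((2::real) *\<^sub>R x)" by (simp only: scaleR_2)
    also have "\<dots> = 2" by (simp only: pn_scale[OF N] that)
    finally show ?thesis .
  qed
  have neg1: "N (- x) = 1" if "N x = 1" for x using pn_neg[OF N] that by simp
  have cd: "c = d"
  proof (rule ccontr)
    assume cd: "c \<noteq> d"
    define X where "X = {x. N (a - x) = 1 \<and> N (0 - x) = 1}"
    have fX: "finite X" "card X = 2" using UR[of a 0] u by (simp_all add: X_def)
    have m1: "N (0 - c) = 1" "N (0 - d) = 1" "N (0 - (a - d)) = 1" "N (a - (a - d)) = 1"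
      using neg1[OF u(3)] neg1[OF u(4)] neg1[OF ad] u(4) by simp_all
    have sub: "{c, d, a - d} \<subseteq> X" using ac ad m1 by (simp add: X_def)
    have n1: "d \<noteq> a - d"
    proof
      assume "d = a - d"
      then have "a = d + d" by (simp add: eq_diff_eq)
      then show False using two[OF u(4)] u(1) by simp
    qed
    have n2: "c \<noteq> a - d"
    proof
      assume "c = a - d"
      then show False using I5 u(4) pn_zero[OF N, of 0] by simp
    qed
    have "card {c, d, a - d} = 3" using cd n1 n2 by simp
    then show False using card_mono[OF fX(1) sub] fX(2) by simp
  qed
  have ab: "a = b"
  proof (rule ccontr)
    assume ab: "a \<noteq> b"
    define X where "X = {x. N (d - x) = 1 \<and> N (0 - x) = 1}"
    have fX: "finite X" "card X = 2" using UR[of d 0] u by (simp_all add: X_def)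
    have m1: "N (0 - a) = 1" "N (0 - b) = 1" "N (0 - (d - a)) = 1" "N (d - (d - a)) = 1"
       "N (d - a) = 1" "N (d - b) = 1"
      using neg1[OF u(1)] neg1[OF u(2)] neg1[OF da] u(1) da bd pn_commute[OF N, of b d] by simp_all
    have sub: "{a, b, d - a} \<subseteq> X" using m1 by (simp add: X_def)
    have n1: "a \<noteq> d - a"
    proof
      assume "a = d - a"
      then have "d = a + a" by (simp add: eq_diff_eq)
      then show False using two[OF u(1)] u(4) by simp
    qed
    have n2: "b \<noteq> d - a"
    proof
      assume "b = d - a"
      then show False using I6 bd pn_commute[OF N, of b d] pn_zero[OF N, of 0] by simp
    qed
    have "card {a, b, d - a} = 3" using ab n1 n2 by simp
    then show False using card_mono[OF fX(1) sub] fX(2) by simp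
  qed
  show ?thesis using ab cd by simp
qed



theorem lemma2:
  shows "(\<forall>(N :: real^2 \<Rightarrow> real) a b c d.
            URTC_norm N \<and> N a = 1 \<and> N b = 1 \<and> N c = 1 \<and> N d = 1 \<and>
            N (a - d) = 1 \<and> N (b - c) = 1 \<and>
            pos_oriented [a - d, a, b, c, d, d - a]
            \<longrightarrow> a = b \<and> c = d)
       \<and> (\<forall>(N :: real^2 \<Rightarrow> real) a b (\<alpha>::real) (\<beta>::real).
            is_plane_norm N \<and> N (a - b) > 0 \<and> \<alpha> \<ge> 0 \<and> \<beta> \<ge> 0 \<and>
            \<bar>\<beta> - N (a - b)\<bar> \<le> \<alpha> \<and> \<alpha> \<le> \<beta> + N (a - b)
            \<longrightarrow> (\<exists>c. N (a - c) = \<beta> \<and> N (b - c) = \<alpha>))"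
  proof (intro conjI allI impI)
  fix N :: "real^2 \<Rightarrow> real" and a b c d
  assume "URTC_norm N \<and> N a = 1 \<and> N b = 1 \<and> N c = 1 \<and> N d = 1 \<and>
            N (a - d) = 1 \<and> N (b - c) = 1 \<and> pos_oriented [a - d, a, b, c, d, d - a]"
  then show "a = b" "c = d" using part1 by blast+
next
  fix N :: "real^2 \<Rightarrow> real" and a b and \<alpha> \<beta> :: real
  assume "is_plane_norm N \<and> N (a - b) > 0 \<and> \<alpha> \<ge> 0 \<and> \<beta> \<ge> 0 \<and>
            \<bar>\<beta> - N (a - b)\<bar> \<le> \<alpha> \<and> \<alpha> \<le> \<beta> + N (a - b)"
  then show "\<exists>c. N (a - c) = \<beta> \<and> N (b - c) = \<alpha>" using part2 by blast
qed

end
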